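(* Let $q\ge2$, $n\ge1$, $P=3\lceil\log_q n+\log_q\log_q n\rceil+1$, and let $p$ be the smallest prime with $p>4n$. Let $d_1\in[0,2q-2]$, $d_2\in[0,p-1]$, $d_3\in[0,\lfloor\frac{(q-1)(P-1)}{3}\rfloor]$, and let $\mathcal{C}^2_{Aux}$ be the set of $\boldsymbol{x}\in\mathcal{ALL}(n,\frac{P-1}{3})$ such that $\mathrm{VT}^{(0)}(\boldsymbol{x})\equiv d_1\pmod{2q-1}$, $\mathrm{VT}^{(2)}(\boldsymbol{x})\equiv d_2\pmod p$, and $\mathrm{VT}^{(0)}(\mathcal{O}(\boldsymbol{x}))\equiv d_3\pmod{\lfloor\frac{(q-1)(P-1)}{3}\rfloor+1}$. Then for any distinct $\boldsymbol{x},\boldsymbol{y}\in\mathcal{C}^2_{Aux}$ with $d_H(\mathcal{R}(\boldsymbol{x}),\mathcal{R}(\boldsymbol{y}))=4$, there do NOT exist $\boldsymbol{u},\boldsymbol{w}\in\Sigma_q^{\ge0}$, $\boldsymbol{v}\in\Sigma_q^{\ge1}$, integers $t_1,t_2\ge1$ and symbols $a_1,b_1,a_2,b_2\in\Sigma_q$ with $a_1\ne b_1$, $a_2\ne b_2$, such that $\boldsymbol{x}=(\boldsymbol{u},\boldsymbol{\alpha}_{t_1}(a_1b_1),\boldsymbol{v},\boldsymbol{\alpha}_{t_2}(a_2b_2),\boldsymbol{w})$ and $\boldsymbol{y}=(\boldsymbol{u},\boldsymbol{\alpha}_{t_1}(b_1a_1),\boldsymbol{v},\boldsymbol{\alpha}_{t_2}(b_2a_2),\boldsymbol{w})$.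 Moreover, there exists a choice of $d_1,d_2,d_3$ such that $r(\mathcal{C}^2_{Aux})\le\log_qn+\log_q\log_qn+O(1)$ as $n\to\infty$.
   Context: $\Sigma_q=\{0,\dots,q-1\}$; $\Sigma_q^{\ge0}$ (resp. $\Sigma_q^{\ge1}$) is the set of finite (resp. nonempty finite) sequences over $\Sigma_q$; $(\cdot,\cdot)$ is concatenation. For $\boldsymbol{x}\in\Sigma_q^n$, $x[i]$ is its $i$-th entry, with $x[i]=0$ for $i\notin[1,n]$. $\mathrm{VT}^{(k)}(\boldsymbol{z})=\sum_i i^kz[i]$. $\mathcal{O}(\boldsymbol{x})=(x[1],x[3],\dots,x[2\lceil n/2\rceil-1])$ is the odd sequence. For distinct $a,b$, $\boldsymbol{\alpha}_t(ab)$ is the alternating sequence $abab\cdots$ of length $t$; a sequence is alternating if it has such a form. $\mathcal{ALL}(n,L)$ is the set of $\boldsymbol{x}\in\Sigma_q^n$ all of whose alternating substrings (contiguous blocks) have length at most $L$. $\mathcal{R}(\boldsymbol{x})$ is the length-$(n+1)$ vector whose $i$-th entry is the multiset $\{\{x[i-1],x[i]\}\}$; $d_H$ is Hamming distance. Redundancy: $r(\mathcal{C})=n-\log_q|\mathcal{C}|$. *)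

theory Defs
  imports Complex_Main "HOL-Computational_Algebra.Primes" "HOL-Library.Multiset"
begin

definition seqs :: "nat \<Rightarrow> nat list set" where
  "seqs q = {x. set x \<subseteq> {..<q}}"

(* 1-indexed entry x[i], with x[i] = 0 outside [1, length x] *)
definition ent :: "nat list \<Rightarrow> nat \<Rightarrow> nat" where
  "ent x i = (if 1 \<le> i \<and> i \<le> length x then x ! (i - 1) else 0)"

definition VT :: "nat \<Rightarrow> nat list \<Rightarrow> nat" where
  "VT k z = (\<Sum>i = 1..length z. i ^ k * ent z i)"

definition oddseq :: "nat list \<Rightarrow> nat list" where
  "oddseq x = map (\<lambda>j. ent x (2 * j + 1)) [0..<(length x + 1) div 2]"

definition alt :: "nat \<Rightarrow> nat \<Rightarrow> nat \<Rightarrow> nat list" where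
  "alt t a b = map (\<lambda>i. if even i then a else b) [0..<t]"

definition is_alt :: "nat list \<Rightarrow> bool" where
  "is_alt s \<longleftrightarrow> (\<exists>a b. a \<noteq> b \<and> s = alt (length s) a b)"

definition ALLs :: "nat \<Rightarrow> nat \<Rightarrow> int \<Rightarrow> nat list set" where
  "ALLs q n L = {x \<in> seqs q. length x = n \<and>
     (\<forall>i l. 1 \<le> l \<and> i + l \<le> n \<and> is_alt (take l (drop i x)) \<longrightarrow> int l \<le> L)}"

definition Rvec :: "nat list \<Rightarrow> nat multiset list" where
  "Rvec x = map (\<lambda>i. {# ent x (i - 1), ent x i #}) [1..<length x + 2]"

definition hamming :: "'a list \<Rightarrow> 'a list \<Rightarrow> nat" where
  "hamming s t = card {i. i < length s \<and> i < length t \<and> s ! i \<noteq> t ! i}"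

definition Pq :: "nat \<Rightarrow> nat \<Rightarrow> int" where
  "Pq q n = 3 * \<lceil>log q (real n) + log q (log q (real n))\<rceil> + 1"

definition pn :: "nat \<Rightarrow> nat" where
  "pn n = (LEAST p. prime p \<and> p > 4 * n)"

definition M3 :: "nat \<Rightarrow> nat \<Rightarrow> nat" where
  "M3 q n = nat \<lfloor>real (q - 1) * real_of_int (Pq q n - 1) / 3\<rfloor>"

definition CAux :: "nat \<Rightarrow> nat \<Rightarrow> nat \<Rightarrow> nat \<Rightarrow> nat \<Rightarrow> nat list set" where
  "CAux q n d1 d2 d3 = {x \<in> ALLs q n ((Pq q n - 1) div 3).
     VT 0 x mod (2 * q - 1) = d1 mod (2 * q - 1) \<and>
     VT 2 x mod pn n = d2 mod pn n \<and>
     VT 0 (oddseq x) mod (M3 q n + 1) = d3 mod (M3 q n + 1)}"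

definition redundancy :: "nat \<Rightarrow> nat \<Rightarrow> nat list set \<Rightarrow> real" where
  "redundancy q n C = real n - log q (real (card C))"

end

theory Submission
  imports Defs "HOL-Real_Asymp.Real_Asymp"
begin



lemma mult_le_card:
  fixes p N B :: nat
  assumes p: "prime p" and N: "0 < N" "N \<le> B"
  shows "multiplicity p N = card {i \<in> {1..B}. p ^ i dvd N}"
proof -
  have m: "multiplicity p N \<le> B"
  proof -
    have "p ^ multiplicity p N dvd N" by (rule multiplicity_dvd)
    hence "p ^ multiplicity p N \<le> N" using N by (simp add: dvd_imp_le)
    moreover have "multiplicity p N < 2 ^ multiplicity p N" by (rule less_exp)
    moreover have "(2::nat) ^ multiplicity p N \<le> p ^ multiplicity p N"
      using prime_ge_2_nat[OF p] by (simp add: power_mono)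
    ultimately show ?thesis using N by linarith
  qed
  have "{i \<in> {1..B}. p ^ i dvd N} = {1..multiplicity p N}"
  proof -
    have "p ^ i dvd N \<longleftrightarrow> i \<le> multiplicity p N" for i
    proof -
      have "N \<noteq> 0" using N by simp
      moreover have "\<not> is_unit p" using prime_gt_1_nat[OF p] by simp
      ultimately show ?thesis by (rule power_dvd_iff_le_multiplicity)
    qed
    note iff = this
    show ?thesis
    proof (rule set_eqI)
      fix i
      have "i \<in> {i \<in> {1..B}. p ^ i dvd N} \<longleftrightarrow> 1 \<le> i \<and> i \<le> B \<and> i \<le> multiplicity p N"
        using iff[of i] by simp
      also have "\<dots> \<longleftrightarrow> i \<in> {1..multiplicity p N}" using m by auto
      finally show "i \<in> {i \<in> {1..B}. p ^ i dvd N} \<longleftrightarrow> i \<in> {1..multiplicity p N}" .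
    qed
  qed
  thus ?thesis by simp
qed


lemma legendre:
  fixes p N B :: nat
  assumes p: "prime p"
  shows "N \<le> B \<Longrightarrow> multiplicity p (fact N) = (\<Sum>i=1..B. N div p ^ i)"
proof (induction N)
  case 0
  then show ?case by simp
next
  case (Suc N)
  have pos: "p ^ i > 0" for i using p prime_gt_0_nat by simp
  have "(\<Sum>i=1..B. Suc N div p ^ i) = (\<Sum>i=1..B. N div p ^ i + (if p ^ i dvd Suc N then 1 else 0))"
    by (rule sum.cong) (auto simp: div_Suc dvd_eq_mod_eq_0)
  also have "\<dots> = (\<Sum>i=1..B. N div p ^ i) + card {i \<in> {1..B}. p ^ i dvd Suc N}"
    by (simp add: sum.distrib sum.If_cases Int_def)
  also have "card {i \<in> {1..B}. p ^ i dvd Suc N} = multiplicity p (Suc N)"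
    using mult_le_card[OF p, of "Suc N" B] Suc.prems by (simp add: Int_def)
  also have "(\<Sum>i=1..B. N div p ^ i) = multiplicity p (fact N)"
    using Suc by simp
  finally have e: "(\<Sum>i=1..B. Suc N div p ^ i) = multiplicity p (fact N) + multiplicity p (Suc N)" .
  have "fact (Suc N) = (Suc N) * (fact N :: nat)" by simp
  hence "multiplicity p (fact (Suc N) :: nat) = multiplicity p (Suc N) + multiplicity p (fact N :: nat)"
    using prime_elem_multiplicity_mult_distrib[of p "Suc N" "fact N"] p by simp
  with e show ?case by simp
qed

lemma central_binom_mult:
  fixes p n :: nat
  assumes p: "prime p" and n: "n \<ge> 1"
  shows "p ^ multiplicity p ((2*n) choose n) \<le> 2 * n"
proof (rule ccontr)
  let ?v = "multiplicity p ((2*n) choose n)"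
  assume a: "\<not> ?thesis"
  have pos: "p ^ i > 0" for i using p prime_gt_0_nat by simp
  have f: "fact n * fact n * ((2*n) choose n) = (fact (2*n) :: nat)"
    using binomial_fact_lemma[of n "2*n"] by simp
  have nz: "((2*n) choose n) \<noteq> 0" by simp
  have "multiplicity p (fact n * fact n * ((2*n) choose n)) = multiplicity p (fact n * fact n :: nat) + ?v"
    by (rule prime_elem_multiplicity_mult_distrib) (use p nz in auto)
  hence "multiplicity p (fact (2*n) :: nat) = multiplicity p (fact n * fact n :: nat) + ?v"
    by (simp only: f)
  also have "multiplicity p (fact n * fact n :: nat) = 2 * multiplicity p (fact n :: nat)"
    using prime_elem_multiplicity_mult_distrib[of p "fact n" "fact n"] p by simp
  finally have v: "?v = (\<Sum>i=1..2*n. 2*n div p ^ i) - 2 * (\<Sum>i=1..2*n. n div p ^ i)"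
    using legendre[OF p, of "2*n" "2*n"] legendre[OF p, of n "2*n"] by simp
  have term_le: "2*n div p ^ i \<le> 2 * (n div p ^ i) + (if i < ?v then 1 else 0)" for i
  proof (cases "i < ?v")
    case True
    have "2*n div d \<le> 2 * (n div d) + 1" if "d > 0" for d :: nat
    proof -
      have "2*n = 2*(d*(n div d)) + 2*(n mod d)" by (metis add_mult_distrib2 div_mult_mod_eq mult.commute)
      moreover have "2*(n mod d) < 2*d" using that by simp
      ultimately have "2*n < d * (2*(n div d) + 2)" by (simp add: algebra_simps)
      hence "2*n div d < 2*(n div d) + 2"
        using less_mult_imp_div_less[of "2*n" "2*(n div d)+2" d] by (simp add: mult.commute)
      thus ?thesis by simp
    qed
    thus ?thesis using True pos by simp
  next
    case False
    have "p ^ ?v \<le> p ^ i" using False prime_gt_0_nat[OF p]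
      by (intro power_increasing) auto
    hence "2*n < p ^ i" using a by simp
    thus ?thesis by simp
  qed
  have "(\<Sum>i=1..2*n. 2*n div p ^ i) \<le> (\<Sum>i=1..2*n. 2 * (n div p ^ i) + (if i < ?v then 1 else 0))"
    by (rule sum_mono) (rule term_le)
  also have "\<dots> = 2 * (\<Sum>i=1..2*n. n div p ^ i) + card {i\<in>{1..2*n}. i < ?v}"
    by (simp add: sum.distrib sum.If_cases sum_distrib_left Int_def)
  also have "card {i\<in>{1..2*n}. i < ?v} \<le> card {1..<?v}"
    by (rule card_mono) auto
  finally have "?v \<le> ?v - 1" using v by simp
  moreover have "?v \<ge> 1"
  proof (rule ccontr)
    assume "\<not> ?v \<ge> 1" hence "?v = 0" by simp
    thus False using a n by simp
  qed
  ultimately show False by simp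
qed




lemma prod_primes_dvd:
  fixes N :: nat
  assumes "finite S" "\<And>p. p \<in> S \<Longrightarrow> prime p \<and> p dvd N"
  shows "\<Prod>S dvd N"
  using assms
proof (induction S rule: finite_induct)
  case empty
  then show ?case by simp
next
  case (insert p S)
  have cop: "coprime p (\<Prod>S)"
  proof (rule prod_coprime_right)
    fix i assume "i \<in> S"
    hence "prime i" "i \<noteq> p" using insert by auto
    moreover have "prime p" using insert by auto
    ultimately show "coprime p i" using primes_coprime[of p i] by auto
  qed
  have "p dvd N" using insert by auto
  moreover have "\<Prod>S dvd N" using insert by auto
  ultimately have "p * \<Prod>S dvd N" using cop by (rule divides_mult)
  thus ?case using insert by simp
qed

definition prml :: "nat \<Rightarrow> nat" where
  "prml x = \<Prod>{p. prime p \<and> p \<le> x}"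

lemma fin_primes_le: "finite {p::nat. prime p \<and> p \<le> x}"
  by (rule finite_subset[of _ "{..x}"]) auto

lemma binom_odd_le: "(2*m+1) choose m \<le> 4 ^ m"
proof -
  have s: "(2*m+1) choose (m+1) = (2*m+1) choose m"
    using binomial_symmetric[of "m+1" "2*m+1"] by simp
  have "((2*m+1) choose m) + ((2*m+1) choose (m+1)) = (\<Sum>k\<in>{m, m+1}. (2*m+1) choose k)"
    by simp
  also have "\<dots> \<le> (\<Sum>k\<le>2*m+1. (2*m+1) choose k)"
    by (rule sum_mono2) auto
  also have "\<dots> = 2 ^ (2*m+1)" by (rule choose_row_sum)
  finally have "2 * ((2*m+1) choose m) \<le> 2 * 4 ^ m"
    using s by (simp add: power_mult power_add)
  thus ?thesis by simp
qed

lemma primes_mid_dvd: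
  fixes m p :: nat
  assumes p: "prime p" "m + 1 < p" "p \<le> 2*m+1"
  shows "p dvd ((2*m+1) choose m)"
proof -
  have f: "fact m * fact (m+1) * ((2*m+1) choose m) = (fact (2*m+1) :: nat)"
    using binomial_fact_lemma[of m "2*m+1"] by (simp add: algebra_simps)
  have "p dvd (fact (2*m+1) :: nat)" using p(1) p(3) prime_dvd_fact_iff[of p "2*m+1"] by simp
  hence "p dvd fact m * fact (m+1) * ((2*m+1) choose m)" using f by simp
  moreover have "\<not> p dvd (fact m :: nat)" using p prime_dvd_fact_iff[of p m] by simp
  moreover have "\<not> p dvd (fact (m+1) :: nat)" using p prime_dvd_fact_iff[of p "m+1"] by simp
  ultimately show ?thesis using p(1) by (simp add: prime_dvd_mult_iff)
qed

lemma prml_le: "prml x \<le> 4 ^ x"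
proof (induction x rule: less_induct)
  case (less x)
  show ?case
  proof (cases "x \<le> 2")
    case True
    show ?thesis
    proof (cases "x = 2")
      case True
      have "prime p \<and> p \<le> x \<longleftrightarrow> p = 2" for p :: nat
      proof
        assume "prime p \<and> p \<le> x" thus "p = 2" using prime_ge_2_nat[of p] True by linarith
      next
        assume "p = 2" thus "prime p \<and> p \<le> x" using True by simp
      qed
      hence "{p::nat. prime p \<and> p \<le> x} = {2}" by blast
      thus ?thesis unfolding prml_def using True by simp
    next
      case False
      have "\<not> (prime p \<and> p \<le> x)" for p :: nat
        using False \<open>x \<le> 2\<close> prime_ge_2_nat[of p] by linarith
      hence e: "{p::nat. prime p \<and> p \<le> x} = {}" by blast
      show ?thesis unfolding prml_def e by simp
    qed
  next
    case False
    show ?thesis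
    proof (cases "even x")
      case True
      have np: "\<not> prime x"
        using True False prime_odd_nat[of x] by auto
      have "prime p \<and> p \<le> x \<longleftrightarrow> prime p \<and> p \<le> x - 1" for p :: nat
      proof
        assume a: "prime p \<and> p \<le> x"
        hence "p \<noteq> x" using np by blast
        thus "prime p \<and> p \<le> x - 1" using a by linarith
      next
        assume "prime p \<and> p \<le> x - 1" thus "prime p \<and> p \<le> x" by linarith
      qed
      hence "{p::nat. prime p \<and> p \<le> x} = {p::nat. prime p \<and> p \<le> x - 1}" by blast
      hence "prml x = prml (x - 1)" unfolding prml_def by simp
      also have "\<dots> \<le> 4 ^ (x - 1)" using less.IH[of "x - 1"] False by simp
      also have "\<dots> \<le> 4 ^ x" by (rule power_increasing) auto
      finally show ?thesis .
    next
      case odd: False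
      define m where "m = x div 2"
      have xm: "x = 2*m+1" using odd unfolding m_def by simp
      have m1: "m \<ge> 1" using False xm by simp
      let ?A = "{p::nat. prime p \<and> p \<le> m+1}"
      let ?B = "{p::nat. prime p \<and> m+1 < p \<and> p \<le> 2*m+1}"
      have un: "{p::nat. prime p \<and> p \<le> x} = ?A \<union> ?B" using xm by auto
      have fa: "finite ?A" by (rule fin_primes_le)
      have fb: "finite ?B" by (rule finite_subset[of _ "{..2*m+1}"]) auto
      have "prml x = \<Prod>?A * \<Prod>?B"
        unfolding prml_def un by (rule prod.union_disjoint[OF fa fb]) auto
      also have "\<Prod>?A \<le> 4 ^ (m+1)"
        using less.IH[of "m+1"] xm m1 unfolding prml_def by simp
      also have "\<Prod>?B \<le> 4 ^ m"
      proof -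
        have "\<Prod>?B dvd ((2*m+1) choose m)"
          by (rule prod_primes_dvd[OF fb]) (use primes_mid_dvd[of _ m] in simp)
        hence "\<Prod>?B \<le> ((2*m+1) choose m)" by (rule dvd_imp_le) simp
        thus ?thesis using binom_odd_le[of m] by linarith
      qed
      finally have "prml x \<le> 4 ^ (m+1) * 4 ^ m" by simp
      also have "\<dots> = 4 ^ x" using xm by (simp add: power_add[symmetric])
      finally show ?thesis .
    qed
  qed
qed




lemma binom_bound:
  fixes n m s :: nat
  assumes n: "n \<ge> 1" and s: "2*n < (s+1)^2"
    and pm: "\<And>p. prime p \<Longrightarrow> p dvd ((2*n) choose n) \<Longrightarrow> p \<le> m"
  shows "(2*n) choose n \<le> (2*n)^(s+1) * 4^m"
proof -
  let ?C = "(2*n) choose n"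
  let ?PF = "prime_factors ?C"
  let ?g = "\<lambda>p. p ^ multiplicity p ?C"
  have Cpos: "?C > 0" by simp
  have fin: "finite ?PF" by simp
  have "?C = (\<Prod>p\<in>?PF. ?g p)" using prime_factorization_nat[OF Cpos] .
  also have "\<dots> = (\<Prod>p\<in>?PF \<inter> {..s}. ?g p) * (\<Prod>p\<in>?PF - {..s}. ?g p)"
    by (rule prod.Int_Diff[OF fin])
  also have "(\<Prod>p\<in>?PF \<inter> {..s}. ?g p) \<le> (2*n)^(s+1)"
  proof -
    have "(\<Prod>p\<in>?PF \<inter> {..s}. ?g p) \<le> (\<Prod>p\<in>?PF \<inter> {..s}. 2*n)"
    proof (rule prod_mono)
      fix p assume "p \<in> ?PF \<inter> {..s}"
      hence "prime p" by (simp add: in_prime_factors_iff)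
      thus "0 \<le> ?g p \<and> ?g p \<le> 2*n" using central_binom_mult[OF _ n] by simp
    qed
    also have "\<dots> = (2*n) ^ card (?PF \<inter> {..s})" by simp
    also have "\<dots> \<le> (2*n) ^ (s+1)"
    proof (rule power_increasing)
      have "card (?PF \<inter> {..s}) \<le> card {..s}" by (rule card_mono) auto
      thus "card (?PF \<inter> {..s}) \<le> s + 1" by simp
      show "1 \<le> 2*n" using n by simp
    qed
    finally show ?thesis .
  qed
  also have "(\<Prod>p\<in>?PF - {..s}. ?g p) \<le> 4^m"
  proof -
    have "(\<Prod>p\<in>?PF - {..s}. ?g p) \<le> (\<Prod>p\<in>?PF - {..s}. p)"
    proof (rule prod_mono)
      fix p assume pin: "p \<in> ?PF - {..s}"
      hence pp: "prime p" by (simp add: in_prime_factors_iff)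
      have ps: "p \<ge> s + 1" using pin by auto
      have le: "?g p \<le> 2*n" using central_binom_mult[OF pp n] .
      have "multiplicity p ?C < 2"
      proof (rule ccontr)
        assume "\<not> multiplicity p ?C < 2"
        hence "p ^ 2 \<le> ?g p" using prime_gt_0_nat[OF pp] by (intro power_increasing) auto
        moreover have "(s+1)^2 \<le> p^2" using ps by (rule power_mono) simp
        ultimately show False using le s by linarith
      qed
      hence "?g p \<le> p ^ 1" using prime_gt_0_nat[OF pp] by (intro power_increasing) auto
      thus "0 \<le> ?g p \<and> ?g p \<le> p" by simp
    qed
    also have "\<dots> \<le> prml m"
    proof -
      have sub: "?PF - {..s} \<subseteq> {p. prime p \<and> p \<le> m}"
      proof
        fix p assume "p \<in> ?PF - {..s}"
        hence "prime p" "p dvd ?C" by (auto simp: in_prime_factors_iff)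
        thus "p \<in> {p. prime p \<and> p \<le> m}" using pm by blast
      qed
      have "(\<Prod>p\<in>?PF - {..s}. p) dvd prml m"
        unfolding prml_def by (rule prod_dvd_prod_subset[OF fin_primes_le sub])
      moreover have "prml m > 0" unfolding prml_def
        by (rule prod_pos) (use prime_gt_0_nat in auto)
      ultimately show ?thesis by (rule dvd_imp_le)
    qed
    also have "\<dots> \<le> 4 ^ m" by (rule prml_le)
    finally show ?thesis .
  qed
  finally show ?thesis by simp
qed

lemma asymp_fact: "eventually (\<lambda>x::real. (16*x) powr (sqrt(16*x)+2) < 4 powr (4*x)) at_top"
  by real_asymp

lemma exists_prime_eventually:
  "eventually (\<lambda>k::nat. \<exists>p. prime p \<and> 4*k < p \<and> p \<le> 16*k) sequentially"
proof -
  have ev: "eventually (\<lambda>k::nat. (16*real k) powr (sqrt(16*real k)+2) < 4 powr (4*real k)) sequentially"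
    using eventually_compose_filterlim[OF asymp_fact filterlim_real_sequentially] .
  have ev1: "eventually (\<lambda>k::nat. k \<ge> 1) sequentially" by (rule eventually_ge_at_top)
  show ?thesis
  proof (rule eventually_mono[OF eventually_conj[OF ev ev1]])
    fix k :: nat
    assume a: "(16*real k) powr (sqrt(16*real k)+2) < 4 powr (4*real k) \<and> k \<ge> 1"
    show "\<exists>p. prime p \<and> 4*k < p \<and> p \<le> 16*k"
    proof (rule ccontr)
      assume nex: "\<not> ?thesis"
      define n where "n = 8*k"
      have n1: "n \<ge> 1" using a n_def by simp
      define s where "s = nat \<lfloor>sqrt (real (2*n))\<rfloor>"
      have "sqrt (real (2*n)) < real s + 1" unfolding s_def by linarith
      hence "sqrt (real (2*n)) ^ 2 < (real s + 1) ^ 2"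
        by (intro power_strict_mono) auto
      moreover have "(real s + 1)^2 = real ((s+1)^2)" by simp
      ultimately have "real (2*n) < real ((s+1)^2)" by simp
      hence s2: "2*n < (s+1)^2" by (simp only: of_nat_less_iff)
      have sr: "real s \<le> sqrt (real (2*n))" unfolding s_def by simp
      have pm: "p \<le> 4*k" if "prime p" "p dvd ((2*n) choose n)" for p
      proof -
        have "multiplicity p ((2*n) choose n) \<ge> 1"
        proof -
          have "p ^ 1 dvd ((2*n) choose n)" using that by simp
          hence "1 \<le> multiplicity p ((2*n) choose n)"
            using power_dvd_iff_le_multiplicity[of "(2*n) choose n" p 1] prime_gt_1_nat[OF that(1)]
            by simp
          thus ?thesis .
        qed
        hence "p ^ 1 \<le> p ^ multiplicity p ((2*n) choose n)"
          using prime_gt_0_nat[OF that(1)] by (intro power_increasing) auto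
        hence p16: "p \<le> 16*k" using central_binom_mult[OF that(1) n1] n_def by simp
        have "\<not> (4*k < p)" using nex that(1) p16 by blast
        thus ?thesis by simp
      qed
      have B: "(2*n) choose n \<le> (2*n)^(s+1) * 4^(4*k)"
        by (rule binom_bound[OF n1 s2]) (use pm in auto)
      have L: "4^n / (2*real n) \<le> real ((2*n) choose n)"
        by (rule central_binomial_lower_bound) (use n1 in simp)
      have "(4::real)^n \<le> (2*real n) * ((2*real n)^(s+1) * 4^(4*k))"
      proof -
        have "real ((2*n) choose n) \<le> real ((2*n)^(s+1) * 4^(4*k))"
          using B by (simp only: of_nat_le_iff)
        also have "\<dots> = (2*real n)^(s+1) * 4^(4*k)" by simp
        finally have "(4::real)^n / (2*real n) \<le> (2*real n)^(s+1) * 4^(4*k)"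
          using L by linarith
        thus ?thesis using n1 by (simp add: divide_le_eq mult.commute)
      qed
      also have "\<dots> = (2*real n)^(s+2) * 4^(4*k)" by simp
      finally have "(4::real)^(4*k) * 4^(4*k) \<le> (2*real n)^(s+2) * 4^(4*k)"
        using n_def by (simp add: power_add[symmetric])
      hence i1: "(4::real)^(4*k) \<le> (2*real n)^(s+2)" by simp
      have e16: "2*real n = 16*real k" using n_def by simp
      have "(16*real k) powr (real (s+2)) = (16*real k)^(s+2)"
        by (rule powr_realpow) (use a in simp)
      moreover have "real (s+2) = real s + 2" by simp
      ultimately have "(2*real n)^(s+2) = (16*real k) powr (real s + 2)"
        using e16 by metis
      also have "\<dots> \<le> (16*real k) powr (sqrt(16*real k)+2)"
        using sr n_def a by (intro powr_mono) auto
      also have "\<dots> < 4 powr (4*real k)" using a by simp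
      also have "\<dots> = 4^(4*k)" by (simp add: powr_realpow[symmetric])
      finally show False using i1 by simp
    qed
  qed
qed

lemma pn_le: "eventually (\<lambda>k. pn k \<le> 16*k) sequentially"
proof (rule eventually_mono[OF exists_prime_eventually])
  fix k :: nat assume "\<exists>p. prime p \<and> 4*k < p \<and> p \<le> 16*k"
  then obtain p where p: "prime p" "4*k < p" "p \<le> 16*k" by blast
  have "pn k \<le> p" unfolding pn_def by (rule Least_le) (use p in simp)
  thus "pn k \<le> 16*k" using p by simp
qed




definition W :: "nat \<Rightarrow> nat \<Rightarrow> nat list \<Rightarrow> int" where
  "W k s z = (\<Sum>i<length z. int ((s+i+1)^k * z!i))"

lemma W_Nil [simp]: "W k s [] = 0" by (simp add: W_def)

lemma W_Cons [simp]: "W k s (c # z) = int ((s+1)^k * c) + W k (Suc s) z"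
  unfolding W_def length_Cons sum.lessThan_Suc_shift by simp

lemma W_append: "W k s (a @ b) = W k s a + W k (s + length a) b"
  by (induction a arbitrary: s) simp_all

lemma VT_W: "int (VT k z) = W k 0 z"
proof -
  have "VT k z = (\<Sum>i<length z. (Suc i)^k * ent z (Suc i))"
    unfolding VT_def using sum.atLeast1_atMost_eq[of "\<lambda>i. i^k * ent z i" "length z"] by simp
  also have "\<dots> = (\<Sum>i<length z. (Suc i)^k * z ! i)"
    by (rule sum.cong) (auto simp: ent_def)
  finally show ?thesis unfolding W_def by simp
qed

definition Od :: "nat \<Rightarrow> nat list \<Rightarrow> int" where
  "Od s z = (\<Sum>i<length z. if even (s+i) then int (z!i) else 0)"

lemma O_Nil [simp]: "Od s [] = 0" by (simp add: Od_def)

lemma O_Cons [simp]: "Od s (c # z) = (if even s then int c else 0) + Od (Suc s) z"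
  unfolding Od_def length_Cons sum.lessThan_Suc_shift
  by (auto intro!: sum.cong)

lemma O_append: "Od s (a @ b) = Od s a + Od (s + length a) b"
  by (induction a arbitrary: s) simp_all

lemma VT0_oddseq: "int (VT 0 (oddseq x)) = Od 0 x"
proof -
  let ?n = "length x"
  let ?h = "(\<lambda>j. ent x (2*j+1))"
  have "VT 0 (oddseq x) = (\<Sum>i<length (oddseq x). ent (oddseq x) (Suc i))"
    unfolding VT_def using sum.atLeast1_atMost_eq[of "\<lambda>i. i^0 * ent (oddseq x) i" "length (oddseq x)"] by simp
  also have "\<dots> = (\<Sum>j<(?n+1) div 2. x ! (2*j))"
  proof (rule sum.cong)
    show "{..<length (oddseq x)} = {..<(?n+1) div 2}" by (simp add: oddseq_def)
    fix j assume "j \<in> {..<(?n+1) div 2}"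
    hence j: "j < (?n+1) div 2" by simp
    hence "2*j < ?n" by linarith
    thus "ent (oddseq x) (Suc j) = x ! (2*j)"
      using j by (simp add: ent_def oddseq_def)
  qed
  finally have 1: "int (VT 0 (oddseq x)) = (\<Sum>j<(?n+1) div 2. int (x ! (2*j)))" by simp
  have "Od 0 x = (\<Sum>i\<in>{..<?n} \<inter> {i. even i}. int (x!i))"
    unfolding Od_def by (simp add: sum.If_cases)
  also have "{..<?n} \<inter> {i. even i} = (\<lambda>j. 2*j) ` {..<(?n+1) div 2}"
  proof (rule set_eqI)
    fix i
    show "i \<in> {..<?n} \<inter> {i. even i} \<longleftrightarrow> i \<in> (\<lambda>j. 2*j) ` {..<(?n+1) div 2}"
    proof
      assume "i \<in> {..<?n} \<inter> {i. even i}"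
      hence "i < ?n" "even i" by auto
      hence "i = 2 * (i div 2)" "i div 2 < (?n+1) div 2" by auto
      thus "i \<in> (\<lambda>j. 2*j) ` {..<(?n+1) div 2}" by blast
    next
      assume "i \<in> (\<lambda>j. 2*j) ` {..<(?n+1) div 2}"
      then obtain j where "i = 2*j" "j < (?n+1) div 2" by auto
      thus "i \<in> {..<?n} \<inter> {i. even i}" by auto
    qed
  qed
  also have "(\<Sum>i\<in>(\<lambda>j. 2*j) ` {..<(?n+1) div 2}. int (x!i)) = (\<Sum>j<(?n+1) div 2. int (x ! (2*j)))"
    by (rule sum.reindex_cong[where l="\<lambda>j. 2*j"]) (auto simp: inj_on_def)
  finally show ?thesis using 1 by simp
qed

lemma alt_Suc: "alt (Suc t) a b = a # alt t b a"
proof -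
  have "[0..<Suc t] = 0 # map Suc [0..<t]" by (simp add: map_Suc_upt upt_conv_Cons)
  thus ?thesis unfolding alt_def by simp
qed

lemma alt_0 [simp]: "alt 0 a b = []" by (simp add: alt_def)
lemma length_alt [simp]: "length (alt t a b) = t" by (simp add: alt_def)

definition A :: "nat \<Rightarrow> nat \<Rightarrow> nat \<Rightarrow> int" where
  "A k s t = (\<Sum>j<t. (-1)^j * int ((s+j+1)^k))"

definition E :: "nat \<Rightarrow> nat \<Rightarrow> int" where
  "E s t = (\<Sum>j<t. if even (s+j) then (-1)^j else 0)"

lemma A_Suc: "A k s (Suc t) = int ((s+1)^k) - A k (Suc s) t"
  unfolding A_def sum.lessThan_Suc_shift by (simp add: sum_negf[symmetric])

lemma E_Suc: "E s (Suc t) = (if even s then 1 else 0) - E (Suc s) t"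
  unfolding E_def sum.lessThan_Suc_shift by (auto simp: sum_negf[symmetric] intro!: sum.cong)

lemma W_alt_diff:
  "W k s (alt t a b) - W k s (alt t b a) = (int a - int b) * A k s t"
proof (induction t arbitrary: s a b)
  case 0
  then show ?case by (simp add: A_def)
next
  case (Suc t)
  show ?case using Suc.IH[of "Suc s" b a]
    by (simp add: alt_Suc A_Suc algebra_simps)
qed

lemma O_alt_diff:
  "Od s (alt t a b) - Od s (alt t b a) = (int a - int b) * E s t"
proof (induction t arbitrary: s a b)
  case 0
  then show ?case by (simp add: E_def)
next
  case (Suc t)
  show ?case using Suc.IH[of "Suc s" b a]
    by (simp add: alt_Suc E_Suc algebra_simps)
qed




lemma A0_closed: "A 0 s t = (if even t then 0 else 1)"
proof (induction t arbitrary: s)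
  case 0 thus ?case by (simp add: A_def)
next
  case (Suc t) thus ?case by (simp add: A_Suc)
qed

lemma A2_even: "A 2 s (2*m) = - int m * (2*int s + 2*int m + 1)"
proof (induction m arbitrary: s)
  case 0 thus ?case by (simp add: A_def)
next
  case (Suc m)
  have "A 2 s (2*Suc m) = A 2 s (Suc (Suc (2*m)))" by simp
  also have "\<dots> = int ((s+1)^2) - int ((s+2)^2) + A 2 (Suc (Suc s)) (2*m)"
    by (simp add: A_Suc)
  also have "\<dots> = - int (Suc m) * (2*int s + 2*int (Suc m) + 1)"
    using Suc.IH[of "Suc (Suc s)"] by (simp add: algebra_simps power2_eq_square)
  finally show ?case .
qed

lemma A2_odd: "A 2 s (2*m+1) = int ((s+1)^2) + int m * (2*int s + 2*int m + 3)"
  using A2_even[of "Suc s" m] by (simp add: A_Suc algebra_simps)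

definition sg :: "nat \<Rightarrow> int" where "sg s = (if even s then 1 else -1)"

lemma E_even: "E s (2*m) = sg s * int m"
proof (induction m arbitrary: s)
  case 0 thus ?case by (simp add: E_def)
next
  case (Suc m)
  have "E s (2*Suc m) = E s (Suc (Suc (2*m)))" by simp
  also have "\<dots> = (if even s then 1 else 0) - (if even (Suc s) then 1 else 0) + E (Suc (Suc s)) (2*m)"
    by (simp add: E_Suc)
  also have "\<dots> = sg s * int (Suc m)"
    using Suc.IH[of "Suc (Suc s)"] by (simp add: sg_def algebra_simps)
  finally show ?case .
qed

lemma E_odd: "E s (2*m+1) = (if even s then int m + 1 else - int m)"
  using E_even[of "Suc s" m] by (simp add: E_Suc sg_def)

lemma small_dvd_zero:
  fixes M x :: int
  assumes "M dvd x" "\<bar>x\<bar> < M"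
  shows "x = 0"
proof (rule ccontr)
  assume "x \<noteq> 0"
  hence "\<bar>M\<bar> \<le> \<bar>x\<bar>" using assms(1) by (rule dvd_imp_le_int)
  thus False using assms(2) by simp
qed

lemma prime_dvd3:
  fixes p :: nat and a b c :: int
  assumes p: "prime p" and d: "int p dvd a * b * c"
    and nz: "a \<noteq> 0" "b \<noteq> 0" "c \<noteq> 0"
    and lt: "\<bar>a\<bar> < int p" "\<bar>b\<bar> < int p" "\<bar>c\<bar> < int p"
  shows False
proof -
  have pi: "prime (int p)" using p by simp
  have nd: "\<not> int p dvd z" if "z \<noteq> 0" "\<bar>z\<bar> < int p" for z
  proof
    assume "int p dvd z"
    hence "\<bar>int p\<bar> \<le> \<bar>z\<bar>" using that(1) by (intro dvd_imp_le_int)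
    thus False using that(2) by simp
  qed
  have "int p dvd a * b \<or> int p dvd c" using d pi by (simp add: prime_dvd_mult_iff)
  hence "int p dvd a \<or> int p dvd b \<or> int p dvd c" using pi by (auto simp: prime_dvd_mult_iff)
  thus False using nd nz lt by blast
qed




lemma core:
  fixes q n L p s r t1 t2 :: nat and d1 d2 :: int
  assumes q2: "q \<ge> 2" and d1: "d1 \<noteq> 0" "\<bar>d1\<bar> \<le> int q - 1" and d2: "d2 \<noteq> 0" "\<bar>d2\<bar> \<le> int q - 1"
   and t: "1 \<le> t1" "t1 \<le> L" "1 \<le> t2" "t2 \<le> L" and sr: "s + t1 < r" "r + t2 \<le> n" and qn: "q \<le> n"
   and p: "prime p" "4*n < p"
   and c0: "int (2*q-1) dvd d1 * A 0 s t1 + d2 * A 0 r t2"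
   and co: "int ((q-1)*L+1) dvd d1 * E s t1 + d2 * E r t2"
   and c2: "int p dvd d1 * A 2 s t1 + d2 * A 2 r t2"
  shows False
proof -
  have dp: "\<bar>d1\<bar> < int p" using d1 qn p by linarith
  have M0: "int (2*q-1) = 2 * int q - 1" using q2 by simp
  have MO: "int ((q-1)*L+1) = (int q - 1) * int L + 1" using q2 by (simp add: of_nat_diff)
  have sgabs: "\<bar>sg z\<bar> = 1" for z by (simp add: sg_def)
  consider (ee) "even t1" "even t2" | (eo) "even t1" "odd t2" | (oe) "odd t1" "even t2" | (oo) "odd t1" "odd t2"
    by blast
  then show False
  proof cases
    case eo
    hence "int (2*q-1) dvd d2" using c0 by (simp add: A0_closed)
    hence "d2 = 0" using d2 M0 by (intro small_dvd_zero[of "int (2*q-1)"]) auto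
    thus False using d2 by simp
  next
    case oe
    hence "int (2*q-1) dvd d1" using c0 by (simp add: A0_closed)
    hence "d1 = 0" using d1 M0 by (intro small_dvd_zero[of "int (2*q-1)"]) auto
    thus False using d1 by simp
  next
    case ee
    obtain m1 where m1: "t1 = 2*m1" using ee(1) by blast
    obtain m2 where m2: "t2 = 2*m2" using ee(2) by blast
    have m1p: "m1 \<ge> 1" using m1 t by simp
    let ?X = "d1 * sg s * int m1 + d2 * sg r * int m2"
    have X: "d1 * E s t1 + d2 * E r t2 = ?X" using m1 m2 by (simp add: E_even)
    have b1: "\<bar>d1 * sg s * int m1\<bar> \<le> (int q - 1) * int m1"
      using d1(2) by (simp add: abs_mult sgabs mult_right_mono)
    have b2: "\<bar>d2 * sg r * int m2\<bar> \<le> (int q - 1) * int m2"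
      using d2(2) by (simp add: abs_mult sgabs mult_right_mono)
    have "m1 + m2 \<le> L" using m1 m2 t by simp
    hence "(int q - 1) * (int m1 + int m2) \<le> (int q - 1) * int L"
      using q2 by (intro mult_left_mono) auto
    hence "\<bar>?X\<bar> < (int q - 1) * int L + 1" using b1 b2 by (simp add: algebra_simps)
    hence lt: "\<bar>?X\<bar> < int ((q-1)*L+1)" using MO by linarith
    have dX: "int ((q-1)*L+1) dvd ?X" using co X by simp
    have X0: "?X = 0" by (rule small_dvd_zero[OF dX lt])
    have sgsq: "sg r * sg r = 1" by (simp add: sg_def)
    have key: "d2 * int m2 = - (sg s * sg r) * d1 * int m1"
    proof -
      have "sg r * ?X = 0" using X0 by simp
      hence "d1 * sg s * sg r * int m1 + d2 * (sg r * sg r) * int m2 = 0" by (simp add: algebra_simps)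
      thus ?thesis using sgsq by (simp add: algebra_simps)
    qed
    define B where "B = (2*int s + 2*int m1 + 1) - sg s * sg r * (2*int r + 2*int m2 + 1)"
    have D2: "d1 * A 2 s t1 + d2 * A 2 r t2 = - (d1 * int m1 * B)"
    proof -
      have "d1 * A 2 s t1 + d2 * A 2 r t2 = - (d1 * int m1) * (2*int s + 2*int m1 + 1) - (d2 * int m2) * (2*int r + 2*int m2 + 1)"
      proof -
        have e1: "A 2 s t1 = - int m1 * (2*int s + 2*int m1 + 1)" using m1 A2_even by simp
        have e2: "A 2 r t2 = - int m2 * (2*int r + 2*int m2 + 1)" using m2 A2_even by simp
        show ?thesis unfolding e1 e2 by (simp add: algebra_simps)
      qed
      also have "\<dots> = - (d1 * int m1 * B)" unfolding key B_def by (simp add: algebra_simps)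
      finally show ?thesis .
    qed
    have Bb: "B \<noteq> 0 \<and> \<bar>B\<bar> < int p"
    proof (cases "even s = even r")
      case True
      hence "sg s * sg r = 1" by (simp add: sg_def)
      hence "B = 2*int s + 2*int m1 - 2*int r - 2*int m2" unfolding B_def by simp
      thus ?thesis using sr p m1 m2 by auto
    next
      case False
      hence "sg s * sg r = -1" by (auto simp: sg_def)
      hence "B = 2*int s + 2*int m1 + 2*int r + 2*int m2 + 2" unfolding B_def by simp
      thus ?thesis using sr p m1 m2 by auto
    qed
    have "int p dvd d1 * int m1 * B" using c2 D2 by simp
    moreover have "\<bar>int m1\<bar> < int p" using m1 sr p by simp
    moreover have "int m1 \<noteq> 0" using m1p by simp
    ultimately show False using prime_dvd3[OF p(1), of d1 "int m1" B] d1 Bb dp by blast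
  next
    case oo
    obtain m1 where m1: "t1 = 2*m1+1" using oo(1) oddE by blast
    obtain m2 where m2: "t2 = 2*m2+1" using oo(2) oddE by blast
    have "int (2*q-1) dvd d1 + d2" using c0 oo by (simp add: A0_closed)
    moreover have "\<bar>d1 + d2\<bar> < int (2*q-1)" using d1 d2 M0 by linarith
    ultimately have s0: "d1 + d2 = 0" by (rule small_dvd_zero)
    hence d2e: "d2 = - d1" by simp
    define e1 where "e1 = (if even s then int m1 + 1 else - int m1)"
    define e2 where "e2 = (if even r then int m2 + 1 else - int m2)"
    have X: "d1 * E s t1 + d2 * E r t2 = d1 * (e1 - e2)"
    proof -
      have "E s t1 = e1" using m1 E_odd unfolding e1_def by simp
      moreover have "E r t2 = e2" using m2 E_odd unfolding e2_def by simp
      ultimately show ?thesis using d2e by (simp add: algebra_simps)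
    qed
    have "m1 + m2 + 1 \<le> L" using m1 m2 t by simp
    hence eb: "\<bar>e1 - e2\<bar> \<le> int L" unfolding e1_def e2_def by auto
    have "\<bar>d1 * (e1 - e2)\<bar> \<le> (int q - 1) * int L"
      unfolding abs_mult using d1(2) eb by (intro mult_mono) auto
    hence lt: "\<bar>d1 * (e1 - e2)\<bar> < int ((q-1)*L+1)" using MO by linarith
    have dX: "int ((q-1)*L+1) dvd d1 * (e1 - e2)" using co X by simp
    have "d1 * (e1 - e2) = 0" by (rule small_dvd_zero[OF dX lt])
    hence "e1 = e2" using d1 by simp
    hence par: "even s = even r" and mm: "m1 = m2" unfolding e1_def e2_def by (auto split: if_splits)
    have D2: "d1 * A 2 s t1 + d2 * A 2 r t2 = d1 * (int s - int r) * (int s + int r + 2*int m1 + 2)"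
    proof -
      have e1: "A 2 s t1 = int ((s+1)^2) + int m1 * (2*int s + 2*int m1 + 3)" using m1 A2_odd by simp
      have e2: "A 2 r t2 = int ((r+1)^2) + int m1 * (2*int r + 2*int m1 + 3)" using m2 mm A2_odd by simp
      show ?thesis unfolding e1 e2 d2e by (simp add: algebra_simps power2_eq_square)
    qed
    have "int p dvd d1 * (int s - int r) * (int s + int r + 2*int m1 + 2)" using c2 D2 by simp
    moreover have "int s - int r \<noteq> 0" "\<bar>int s - int r\<bar> < int p" using sr p by auto
    moreover have "int s + int r + 2*int m1 + 2 \<noteq> 0" "\<bar>int s + int r + 2*int m1 + 2\<bar> < int p"
      using sr p m1 by auto
    ultimately show False using prime_dvd3[OF p(1)] d1 dp by blast
  qed
qed




definition Lc :: "nat \<Rightarrow> nat \<Rightarrow> int" where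
  "Lc q n = \<lceil>log q (real n) + log q (log q (real n))\<rceil>"

lemma Pq_div: "(Pq q n - 1) div 3 = Lc q n"
  unfolding Pq_def Lc_def by simp

lemma M3_form: "Lc q n \<ge> 0 \<Longrightarrow> M3 q n = (q-1) * nat (Lc q n)"
proof -
  assume h: "Lc q n \<ge> 0"
  have "real (q - 1) * real_of_int (Pq q n - 1) / 3 = real_of_int (int (q-1) * Lc q n)"
    unfolding Pq_def Lc_def by simp
  hence "M3 q n = nat (int (q-1) * Lc q n)" unfolding M3_def by (simp only: floor_of_int)
  also have "\<dots> = (q-1) * nat (Lc q n)" using h by (simp add: nat_mult_distrib)
  finally show ?thesis .
qed

lemma log_small:
  assumes q: "q \<ge> 2" and n: "n \<ge> 1" "n < q"
  shows "Lc q n \<le> 1"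
proof -
  have q1: "(1::real) < real q" using q by simp
  have "log q (real n) + log q (log q (real n)) < 1"
  proof (cases "n = 1")
    case True
    thus ?thesis by (simp add: log_def)
  next
    case False
    hence n2: "real n > 1" using n by simp
    have l1: "log q (real n) < 1" using q1 n by simp
    have l0: "log q (real n) > 0" using q1 n2 by simp
    have "log q (log q (real n)) < 0" using q1 l0 l1 by simp
    thus ?thesis using l1 by linarith
  qed
  thus ?thesis unfolding Lc_def by (simp add: ceiling_le_iff)
qed

lemma pn_prime: "prime (pn n) \<and> 4*n < pn n"
  unfolding pn_def by (rule LeastI_ex) (use bigger_prime in blast)

lemma nat_mod_dvd: "a mod m = b mod (m::nat) \<Longrightarrow> int m dvd int a - int b"
proof -
  assume "a mod m = b mod m"
  hence "int a mod int m = int b mod int m" by (metis of_nat_mod)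
  thus ?thesis by (simp add: mod_eq_dvd_iff)
qed

lemma alt_two: "c \<noteq> d \<Longrightarrow> is_alt [c, d]"
  unfolding is_alt_def by (rule exI[of _ c], rule exI[of _ d]) (simp add: alt_def upt_conv_Cons)

lemma is_alt_alt: "a \<noteq> b \<Longrightarrow> is_alt (alt t a b)"
  unfolding is_alt_def by auto

lemma ALLs_bound:
  assumes "z \<in> ALLs q n L" "take l (drop i z) = s0" "is_alt s0" "1 \<le> l" "i + l \<le> n"
  shows "int l \<le> L"
  using assms unfolding ALLs_def by blast




lemma part1:
  fixes q n :: nat
  assumes q2: "q \<ge> 2" and n1: "n \<ge> 1"
    and xC: "x \<in> CAux q n d1 d2 d3" and yC: "y \<in> CAux q n d1 d2 d3"
    and v: "v \<noteq> []" and t: "t1 \<ge> 1" "t2 \<ge> 1"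
    and ab: "a1 < q" "b1 < q" "a2 < q" "b2 < q" "a1 \<noteq> b1" "a2 \<noteq> b2"
    and x: "x = u @ alt t1 a1 b1 @ v @ alt t2 a2 b2 @ w"
    and y: "y = u @ alt t1 b1 a1 @ v @ alt t2 b2 a2 @ w"
  shows False
proof -
  define L where "L = Lc q n"
  define s where "s = length u"
  define r where "r = length u + t1 + length v"
  have xA: "x \<in> ALLs q n L" and yA: "y \<in> ALLs q n L"
    using xC yC unfolding CAux_def L_def Pq_div by auto
  have lenx: "length x = n" using xA unfolding ALLs_def by simp
  hence nlen: "n = s + t1 + length v + t2 + length w" using x s_def by simp
  have lv: "length v \<ge> 1" using v by (cases v) auto
  have tk1: "take t1 (drop s x) = alt t1 a1 b1" using x s_def by simp
  have t1L: "int t1 \<le> L"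
    by (rule ALLs_bound[OF xA tk1 is_alt_alt[OF ab(5)]]) (use t nlen in auto)
  have tk2: "take t2 (drop r x) = alt t2 a2 b2" using x r_def by simp
  have t2L: "int t2 \<le> L"
    by (rule ALLs_bound[OF xA tk2 is_alt_alt[OF ab(6)]]) (use t nlen r_def s_def in auto)
  have L2: "L \<ge> 2"
  proof (cases "t1 \<ge> 2")
    case True
    obtain t' where t': "t1 = Suc (Suc t')" using True by (metis add_2_eq_Suc le_Suc_ex)
    have "take 2 (drop s x) = [a1, b1]" using x s_def t' by (simp add: alt_Suc)
    from ALLs_bound[OF xA this alt_two[OF ab(5)]] show ?thesis using nlen t' by simp
  next
    case False
    hence t11: "t1 = 1" using t by simp
    obtain c v' where cv: "v = c # v'" using v by (cases v) auto
    have tx: "take 2 (drop s x) = [a1, c]" using x s_def t11 cv by (simp add: alt_Suc)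
    have ty: "take 2 (drop s y) = [b1, c]" using y s_def t11 cv by (simp add: alt_Suc)
    have le: "s + 2 \<le> n" using nlen t11 lv by simp
    show ?thesis
    proof (cases "a1 = c")
      case True
      hence "b1 \<noteq> c" using ab by simp
      from ALLs_bound[OF yA ty alt_two[OF this]] show ?thesis using le by simp
    next
      case False
      from ALLs_bound[OF xA tx alt_two[OF False]] show ?thesis using le by simp
    qed
  qed
  have qn: "q \<le> n"
  proof (rule ccontr)
    assume "\<not> q \<le> n"
    hence "Lc q n \<le> 1" using log_small[OF q2 n1] by simp
    thus False using L2 L_def by simp
  qed
  define Ln where "Ln = nat L"
  have LnL: "int Ln = L" using L2 Ln_def by simp
  have M3e: "M3 q n = (q-1) * Ln" using M3_form[of q n] L2 L_def Ln_def by simp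
  have dk: "int (VT k x) - int (VT k y) = (int a1 - int b1) * A k s t1 + (int a2 - int b2) * A k r t2" for k
  proof -
    have "int (VT k x) - int (VT k y) = (W k s (alt t1 a1 b1) - W k s (alt t1 b1 a1)) + (W k r (alt t2 a2 b2) - W k r (alt t2 b2 a2))"
      unfolding VT_W x y by (simp add: W_append s_def r_def algebra_simps)
    thus ?thesis by (simp add: W_alt_diff)
  qed
  have dO: "int (VT 0 (oddseq x)) - int (VT 0 (oddseq y)) = (int a1 - int b1) * E s t1 + (int a2 - int b2) * E r t2"
  proof -
    have "int (VT 0 (oddseq x)) - int (VT 0 (oddseq y)) = (Od s (alt t1 a1 b1) - Od s (alt t1 b1 a1)) + (Od r (alt t2 a2 b2) - Od r (alt t2 b2 a2))"
      unfolding VT0_oddseq x y by (simp add: O_append s_def r_def algebra_simps)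
    thus ?thesis by (simp add: O_alt_diff)
  qed
  have c0: "int (2*q-1) dvd int (VT 0 x) - int (VT 0 y)"
    by (rule nat_mod_dvd) (use xC yC in \<open>simp add: CAux_def\<close>)
  have c2: "int (pn n) dvd int (VT 2 x) - int (VT 2 y)"
    by (rule nat_mod_dvd) (use xC yC in \<open>simp add: CAux_def\<close>)
  have co: "int (M3 q n + 1) dvd int (VT 0 (oddseq x)) - int (VT 0 (oddseq y))"
    by (rule nat_mod_dvd) (use xC yC in \<open>simp add: CAux_def\<close>)
  show False
  proof (rule core[of q "int a1 - int b1" "int a2 - int b2" t1 Ln t2 s r n "pn n"])
    show "q \<ge> 2" by (rule q2)
    show "int a1 - int b1 \<noteq> 0" "int a2 - int b2 \<noteq> 0" using ab by auto
    show "\<bar>int a1 - int b1\<bar> \<le> int q - 1" "\<bar>int a2 - int b2\<bar> \<le> int q - 1" using ab by auto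
    show "1 \<le> t1" "1 \<le> t2" using t by auto
    show "t1 \<le> Ln" "t2 \<le> Ln" using t1L t2L LnL by auto
    show "s + t1 < r" using r_def s_def lv by linarith
    show "r + t2 \<le> n" using r_def s_def nlen by simp
    show "q \<le> n" by (rule qn)
    show "prime (pn n)" "4*n < pn n" using pn_prime by auto
    show "int (2*q-1) dvd (int a1 - int b1) * A 0 s t1 + (int a2 - int b2) * A 0 r t2"
      using c0 dk[of 0] by simp
    show "int ((q-1)*Ln+1) dvd (int a1 - int b1) * E s t1 + (int a2 - int b2) * E r t2"
      using co dO M3e by simp
    show "int (pn n) dvd (int a1 - int b1) * A 2 s t1 + (int a2 - int b2) * A 2 r t2"
      using c2 dk[of 2] by simp
  qed
qed




definition LS :: "nat \<Rightarrow> nat \<Rightarrow> nat list set" where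
  "LS q k = {xs. set xs \<subseteq> {..<q} \<and> length xs = k}"

lemma LS_fin: "finite (LS q k)" unfolding LS_def by (rule finite_lists_length_eq) simp
lemma LS_card: "card (LS q k) = q ^ k" unfolding LS_def using card_lists_length_eq[of "{..<q}" k] by simp

lemma take_alt: "take k (alt t a b) = alt (min k t) a b"
proof (cases "k \<le> t")
  case True thus ?thesis by (simp add: alt_def take_map min_def)
next
  case False thus ?thesis by (simp add: alt_def min_def)
qed

lemma alt_nth: "j < t \<Longrightarrow> alt t a b ! j = (if even j then a else b)"
  by (simp add: alt_def)

lemma is_alt_eq:
  assumes "is_alt s0" "length s0 \<ge> 2"
  shows "s0 = alt (length s0) (s0!0) (s0!1)"
proof -
  obtain a b where ab: "s0 = alt (length s0) a b" using assms(1) unfolding is_alt_def by blast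
  have l0: "0 < length s0" "1 < length s0" using assms(2) by auto
  have a0: "alt (length s0) a b ! 0 = a" using alt_nth[OF l0(1), of a b] by simp
  have b1: "alt (length s0) a b ! 1 = b" using alt_nth[OF l0(2), of a b] by simp
  have "s0 ! 0 = a" using a0 ab by simp
  moreover have "s0 ! 1 = b" using b1 ab by simp
  ultimately show ?thesis using ab by simp
qed

definition Bd :: "nat \<Rightarrow> nat \<Rightarrow> nat \<Rightarrow> nat list set" where
  "Bd q n L = LS q n - ALLs q n (int L)"

definition Si :: "nat \<Rightarrow> nat \<Rightarrow> nat \<Rightarrow> nat \<Rightarrow> nat list set" where
  "Si q n L i = {x \<in> LS q n. is_alt (take (L+1) (drop i x))}"

lemma ALLs_LS: "ALLs q n L = LS q n - {x. \<exists>i l. 1 \<le> l \<and> i + l \<le> n \<and> is_alt (take l (drop i x)) \<and> \<not> int l \<le> L}"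
  unfolding ALLs_def LS_def seqs_def by blast

lemma Bd_sub: "Bd q n L \<subseteq> (\<Union>i\<in>{i. i + L + 1 \<le> n}. Si q n L i)"
proof
  fix x assume "x \<in> Bd q n L"
  hence xL: "x \<in> LS q n" and "\<exists>i l. 1 \<le> l \<and> i + l \<le> n \<and> is_alt (take l (drop i x)) \<and> \<not> int l \<le> int L"
    unfolding Bd_def ALLs_LS by auto
  then obtain i l where il: "1 \<le> l" "i + l \<le> n" "is_alt (take l (drop i x))" "l > L" by auto
  have lx: "length x = n" using xL unfolding LS_def by simp
  obtain a b where ab: "a \<noteq> b" "take l (drop i x) = alt (length (take l (drop i x))) a b"
    using il(3) unfolding is_alt_def by blast
  have len: "length (take l (drop i x)) = l" using lx il by simp
  have "take (L+1) (drop i x) = take (L+1) (take l (drop i x))" using il by (simp add: min_def)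
  also have "\<dots> = alt (L+1) a b" using ab len il by (simp add: take_alt min_def)
  finally have "is_alt (take (L+1) (drop i x))" using ab(1) by (simp add: is_alt_alt)
  moreover have "i + L + 1 \<le> n" using il by simp
  ultimately show "x \<in> (\<Union>i\<in>{i. i + L + 1 \<le> n}. Si q n L i)" using xL unfolding Si_def by blast
qed

lemma Si_card:
  assumes L: "L \<ge> 1" and i: "i + L + 1 \<le> n"
  shows "card (Si q n L i) \<le> q ^ (n - L + 1)"
proof -
  define f where "f = (\<lambda>x::nat list. (take i x, (x!i, (x!(i+1), drop (i+L+1) x))))"
  define B where "B = LS q i \<times> ({..<q} \<times> ({..<q} \<times> LS q (n - (i+L+1))))"
  have inj: "inj_on f (Si q n L i)"
  proof (rule inj_onI)
    fix x x' assume x: "x \<in> Si q n L i" and x': "x' \<in> Si q n L i" and e: "f x = f x'"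
    have mid: "take (L+1) (drop i z) = alt (L+1) (z!i) (z!(i+1))" if z: "z \<in> Si q n L i" for z
    proof -
      have lz: "length z = n" using z unfolding Si_def LS_def by simp
      have al: "is_alt (take (L+1) (drop i z))" using z unfolding Si_def by simp
      have ln: "length (take (L+1) (drop i z)) = L+1" using lz i by simp
      have h: "take (L+1) (drop i z) = alt (length (take (L+1) (drop i z))) (take (L+1) (drop i z) ! 0) (take (L+1) (drop i z) ! 1)"
        by (rule is_alt_eq[OF al]) (use ln L in simp)
      have e0: "take (L+1) (drop i z) ! 0 = z ! i" using lz i by simp
      have e1: "take (L+1) (drop i z) ! 1 = z ! (i+1)" using lz i L by simp
      show ?thesis using h unfolding ln e0 e1 .
    qed
    have dec: "z = take i z @ take (L+1) (drop i z) @ drop (i+L+1) z" for z :: "nat list"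
    proof -
      have "z = take i z @ drop i z" by simp
      also have "drop i z = take (L+1) (drop i z) @ drop (L+1) (drop i z)" by (rule append_take_drop_id[symmetric])
      also have "drop (L+1) (drop i z) = drop (i+L+1) z" by (simp add: add.commute add.left_commute)
      finally show ?thesis .
    qed
    have "take i x = take i x'" "x!i = x'!i" "x!(i+1) = x'!(i+1)" "drop (i+L+1) x = drop (i+L+1) x'"
      using e unfolding f_def by auto
    thus "x = x'" using dec[of x] dec[of x'] mid[OF x] mid[OF x'] by metis
  qed
  have img: "f ` Si q n L i \<subseteq> B"
  proof
    fix y assume "y \<in> f ` Si q n L i"
    then obtain x where x: "x \<in> Si q n L i" and y: "y = f x" by auto
    have lx: "length x = n" and sx: "set x \<subseteq> {..<q}" using x unfolding Si_def LS_def by auto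
    have "i < length x" "i+1 < length x" using lx i L by auto
    hence "x ! i \<in> set x" "x ! (i+1) \<in> set x" by (auto intro!: nth_mem)
    hence "x ! i < q" "x ! (i+1) < q" using sx by auto
    moreover have "set (take i x) \<subseteq> {..<q}" using sx set_take_subset by fast
    moreover have "set (drop (i+L+1) x) \<subseteq> {..<q}" using sx set_drop_subset by fast
    ultimately show "y \<in> B" unfolding y f_def B_def LS_def using lx i by simp
  qed
  have finB: "finite B" unfolding B_def using LS_fin by simp
  have "card (Si q n L i) \<le> card B" by (rule card_inj_on_le[OF inj img finB])
  also have "card B = q ^ i * (q * (q * q ^ (n - (i+L+1))))"
    unfolding B_def by (simp add: card_cartesian_product LS_card)
  also have "\<dots> = q ^ (i + 2 + (n - (i+L+1)))" by (simp add: power_add)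
  also have "i + 2 + (n - (i+L+1)) = n - L + 1" using i by simp
  finally show ?thesis .
qed

lemma Bd_card:
  assumes L: "L \<ge> 1"
  shows "card (Bd q n L) * q ^ (L - 1) \<le> n * q ^ n"
proof -
  let ?I = "{i. i + L + 1 \<le> n}"
  have finI: "finite ?I" by (rule finite_subset[of _ "{..n}"]) auto
  have cI: "card ?I \<le> n"
  proof -
    have "?I \<subseteq> {..<n}" by auto
    hence "card ?I \<le> card {..<n}" by (rule card_mono[rotated]) simp
    thus ?thesis by simp
  qed
  have finU: "finite (\<Union>i\<in>?I. Si q n L i)"
    using finI by (rule finite_UN_I) (auto simp: Si_def intro: finite_subset[OF _ LS_fin])
  have "card (Bd q n L) \<le> card (\<Union>i\<in>?I. Si q n L i)" by (rule card_mono[OF finU Bd_sub])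
  also have "\<dots> \<le> (\<Sum>i\<in>?I. card (Si q n L i))" by (rule card_UN_le[OF finI])
  also have "\<dots> \<le> card ?I * q ^ (n - L + 1)"
    using sum_bounded_above[of ?I "\<lambda>i. card (Si q n L i)" "q ^ (n - L + 1)"] Si_card[OF L] by simp
  finally have cb: "card (Bd q n L) \<le> card ?I * q ^ (n - L + 1)" .
  show ?thesis
  proof (cases "?I = {}")
    case True
    hence "card (Bd q n L) = 0" using cb by simp
    thus ?thesis by simp
  next
    case False
    then obtain i where "i + L + 1 \<le> n" by auto
    hence e: "n - L + 1 + (L - 1) = n" using L by simp
    have pe: "q ^ (n - L + 1) * q ^ (L - 1) = q ^ n" using e by (metis power_add)
    have "card (Bd q n L) * q ^ (L - 1) \<le> card ?I * q ^ (n - L + 1) * q ^ (L - 1)"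
      using cb by (rule mult_right_mono) simp
    also have "\<dots> = card ?I * (q ^ (n - L + 1) * q ^ (L - 1))" by (simp only: mult.assoc)
    also have "\<dots> = card ?I * q ^ n" using pe by simp
    also have "\<dots> \<le> n * q ^ n" using cI by (rule mult_right_mono) simp
    finally show ?thesis .
  qed
qed

lemma ALLs_card: "card (ALLs q n (int L)) = q ^ n - card (Bd q n L)"
proof -
  have sub: "ALLs q n (int L) \<subseteq> LS q n" unfolding ALLs_def LS_def seqs_def by auto
  have "ALLs q n (int L) = LS q n - Bd q n L" unfolding Bd_def using sub by auto
  moreover have "Bd q n L \<subseteq> LS q n" unfolding Bd_def by auto
  ultimately show ?thesis using card_Diff_subset[OF finite_subset[OF _ LS_fin]] LS_card by (metis)
qed




lemma pigeon:
  fixes D :: "'a set" and F :: "'a \<Rightarrow> 'b set"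
  assumes D: "finite D" "D \<noteq> {}" and sub: "S \<subseteq> (\<Union>d\<in>D. F d)" and fin: "\<And>d. finite (F d)"
  shows "\<exists>d\<in>D. card S \<le> card D * card (F d)"
proof -
  let ?M = "Max ((\<lambda>d. card (F d)) ` D)"
  have "?M \<in> (\<lambda>d. card (F d)) ` D" using D by (intro Max_in) auto
  then obtain d where d: "d \<in> D" "card (F d) = ?M" by auto
  have le: "card (F d') \<le> ?M" if "d' \<in> D" for d' using D that by (intro Max_ge) auto
  have "card S \<le> card (\<Union>d\<in>D. F d)" by (rule card_mono) (use D fin sub in auto)
  also have "\<dots> \<le> (\<Sum>d\<in>D. card (F d))" by (rule card_UN_le[OF D(1)])
  also have "\<dots> \<le> card D * ?M" using sum_bounded_above[of D "\<lambda>d. card (F d)" ?M] le by simp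
  finally have cs: "card S \<le> card D * ?M" .
  show ?thesis
  proof (rule bexI[OF _ d(1)])
    show "card S \<le> card D * card (F d)" using cs d(2) by simp
  qed
qed

lemma CAux_fin: "finite (CAux q n a b c)"
proof (rule finite_subset[OF _ LS_fin])
  show "CAux q n a b c \<subseteq> LS q n" unfolding CAux_def ALLs_def LS_def seqs_def by auto
qed

lemma log_mult_pos: "(x::real) > 0 \<Longrightarrow> y > 0 \<Longrightarrow> log b (x * y) = log b x + log b y"
  by (simp add: log_mult)

definition Kc :: "nat \<Rightarrow> real" where
  "Kc q = log q 2 + log q (2 * real q - 1) + log q 16 + log q (3 * real q)"

lemma part2_n:
  fixes q n :: nat
  assumes q2: "q \<ge> 2" and nN: "q ^ (2*q) \<le> n" and pnb: "pn n \<le> 16 * n"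
  shows "\<exists>d1 d2 d3. d1 \<le> 2 * q - 2 \<and> d2 \<le> pn n - 1 \<and> d3 \<le> M3 q n \<and>
           redundancy q n (CAux q n d1 d2 d3) \<le> log q (real n) + log q (log q (real n)) + Kc q"
proof -
  define rq where "rq = real q"
  have rq1: "rq > 1" using q2 rq_def by simp
  have q0: "q > 0" using q2 by simp
  have "1 \<le> q ^ (2*q)" using q0 by simp
  hence n1: "n \<ge> 1" using nN by linarith
  have rn: "real n > 0" using n1 by simp
  define lq where "lq = log q (real n)"
  have lq2: "lq \<ge> 2 * real q"
  proof -
    have "real (q ^ (2*q)) \<le> real n" using nN by (simp only: of_nat_le_iff)
    hence "rq ^ (2*q) \<le> real n" using rq_def by simp
    hence "log rq (rq ^ (2*q)) \<le> log rq (real n)" using rq1 n1 by (subst log_le_cancel_iff) auto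
    thus ?thesis using rq1 unfolding lq_def rq_def by simp
  qed
  have lq1: "lq \<ge> 1" using lq2 q2 by simp
  have lqn: "lq \<le> real n"
  proof -
    have "n < 2 ^ n" by (rule less_exp)
    also have "(2::nat) ^ n \<le> q ^ n" using q2 by (rule power_mono) simp
    finally have "n \<le> q ^ n" by simp
    hence "real n \<le> real (q ^ n)" by (simp only: of_nat_le_iff)
    hence "real n \<le> rq ^ n" unfolding rq_def by simp
    hence "log rq (real n) \<le> log rq (rq ^ n)" using rq1 rn by (subst log_le_cancel_iff) auto
    thus ?thesis using rq1 unfolding lq_def rq_def by simp
  qed
  have llq0: "log q lq \<ge> 0" using lq1 q2 by simp
  have llq: "log q lq \<le> lq"
  proof -
    have "log q lq \<le> log q (real n)" using lqn lq1 q2 by (subst log_le_cancel_iff) auto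
    thus ?thesis unfolding lq_def .
  qed
  have Lc_ge: "real_of_int (Lc q n) \<ge> lq + log q lq" unfolding Lc_def lq_def by simp
  have Lc_le: "real_of_int (Lc q n) < lq + log q lq + 1" unfolding Lc_def lq_def
    using ceiling_correct[of "log q (real n) + log q (log q (real n))"] by linarith
  define L where "L = nat (Lc q n)"
  have Lc0: "Lc q n \<ge> 1" using Lc_ge lq1 llq0 by linarith
  have rL: "real L = real_of_int (Lc q n)" using Lc0 L_def by simp
  have L1: "L \<ge> 1" using Lc0 L_def by simp
  have iL: "int L = Lc q n" using Lc0 L_def by simp
  have qL: "real (q ^ L) \<ge> real n * lq"
  proof -
    have "real n * lq = rq powr lq * rq powr (log q lq)"
      using rq1 rn lq1 unfolding lq_def rq_def by simp
    also have "\<dots> = rq powr (lq + log q lq)" by (simp add: powr_add)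
    also have "\<dots> \<le> rq powr (real L)" using Lc_ge rL rq1 by (intro powr_mono) auto
    also have "\<dots> = real (q ^ L)" using rq1 unfolding rq_def by (simp add: powr_realpow)
    finally show ?thesis .
  qed
  have qL2: "2 * q * n \<le> q ^ L"
  proof -
    have "real (2 * q * n) = real n * (2 * rq)" unfolding rq_def by simp
    also have "\<dots> \<le> real n * lq" using lq2 rn unfolding rq_def by (intro mult_left_mono) auto
    also have "\<dots> \<le> real (q ^ L)" by (rule qL)
    finally show ?thesis by (simp only: of_nat_le_iff)
  qed
  have bd: "card (Bd q n L) * q ^ (L - 1) \<le> n * q ^ n" by (rule Bd_card[OF L1])
  have bd2: "2 * card (Bd q n L) \<le> q ^ n"
  proof -
    obtain L' where "L = Suc L'" using L1 by (cases L) auto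
    hence qLs: "q ^ L = q * q ^ (L - 1)" by simp
    have "card (Bd q n L) * (2 * q * n) \<le> card (Bd q n L) * q ^ L" using qL2 by (rule mult_left_mono) simp
    also have "\<dots> = q * (card (Bd q n L) * q ^ (L - 1))" using qLs by simp
    also have "\<dots> \<le> q * (n * q ^ n)" using bd by (rule mult_left_mono) simp
    finally have "(2 * card (Bd q n L)) * (q * n) \<le> q ^ n * (q * n)" by (simp add: algebra_simps)
    moreover have "q * n > 0" using q0 n1 by simp
    ultimately show ?thesis by simp
  qed
  have ALL: "ALLs q n ((Pq q n - 1) div 3) = ALLs q n (int L)" using iL Pq_div by simp
  have cA: "q ^ n \<le> 2 * card (ALLs q n (int L))" using ALLs_card[of q n L] bd2 by simp
  define D where "D = {..2*q-2} \<times> {..pn n - 1} \<times> {..M3 q n}"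
  have pn0: "pn n > 0" using pn_prime[of n] by simp
  have cD: "card D = (2*q-1) * pn n * (M3 q n + 1)"
  proof -
    have "card D = Suc (2*q-2) * (Suc (pn n - 1) * Suc (M3 q n))"
      by (simp only: D_def card_cartesian_product card_atMost)
    moreover have "Suc (2*q-2) = 2*q-1" using q2 by simp
    moreover have "Suc (pn n - 1) = pn n" using pn0 by simp
    ultimately show ?thesis by (simp only: mult.assoc Suc_eq_plus1)
  qed
  have sub: "ALLs q n (int L) \<subseteq> (\<Union>d\<in>D. (\<lambda>(a,b,c). CAux q n a b c) d)"
  proof
    fix x assume x: "x \<in> ALLs q n (int L)"
    let ?d = "(VT 0 x mod (2*q-1), VT 2 x mod pn n, VT 0 (oddseq x) mod (M3 q n + 1))"
    have m1: "VT 0 x mod (2*q-1) < 2*q-1" using q2 by (intro mod_less_divisor) simp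
    have m2: "VT 2 x mod pn n < pn n" using pn0 by (rule mod_less_divisor)
    have m3: "VT 0 (oddseq x) mod (M3 q n + 1) < M3 q n + 1" by (intro mod_less_divisor) simp
    have "VT 0 x mod (2*q-1) \<le> 2*q-2" using m1 by linarith
    moreover have "VT 2 x mod pn n \<le> pn n - 1" using m2 by linarith
    moreover have "VT 0 (oddseq x) mod (M3 q n + 1) \<le> M3 q n" using m3 by linarith
    ultimately have "?d \<in> D" unfolding D_def by simp
    moreover have "x \<in> (\<lambda>(a,b,c). CAux q n a b c) ?d"
      using x ALL unfolding CAux_def by simp
    ultimately show "x \<in> (\<Union>d\<in>D. (\<lambda>(a,b,c). CAux q n a b c) d)" by blast
  qed
  have finD: "finite D" "D \<noteq> {}" unfolding D_def by auto
  obtain d where dD: "d \<in> D" and dc: "card (ALLs q n (int L)) \<le> card D * card ((\<lambda>(a,b,c). CAux q n a b c) d)"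
    using pigeon[OF finD sub] CAux_fin by (auto split: prod.splits)
  obtain a b c where abc: "d = (a, b, c)" by (cases d) auto
  let ?C = "CAux q n a b c"
  have dc': "q ^ n \<le> 2 * card D * card ?C" using cA dc abc by simp
  have Cpos: "card ?C > 0"
  proof (rule ccontr)
    assume "\<not> card ?C > 0"
    hence "q ^ n = 0" using dc' by simp
    thus False using q0 by simp
  qed
  have Dpos: "card D > 0" using cD q2 pn0 by simp
  have red: "redundancy q n ?C \<le> log q (real (2 * card D))"
  proof -
    have "rq ^ n \<le> real (2 * card D) * real (card ?C)"
    proof -
      have "real (q ^ n) \<le> real (2 * card D * card ?C)" using dc' by (simp only: of_nat_le_iff)
      thus ?thesis unfolding rq_def by simp
    qed
    hence "log rq (rq ^ n) \<le> log rq (real (2 * card D) * real (card ?C))"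
      using rq1 by (subst log_le_cancel_iff) (auto simp: Cpos Dpos)
    hence "real n \<le> log rq (real (2 * card D)) + log rq (real (card ?C))"
      using rq1 Cpos Dpos by (simp add: log_mult)
    thus ?thesis unfolding redundancy_def rq_def by simp
  qed
  have M3e: "M3 q n = (q - 1) * L" using M3_form[of q n] Lc0 L_def by simp
  have logD: "log q (real (2 * card D)) = log q 2 + log q (2 * rq - 1) + log q (real (pn n)) + log q (real (M3 q n + 1))"
  proof -
    have r21: "real (2*q-1) = 2*rq-1" using q2 unfolding rq_def by (simp add: of_nat_diff)
    have "real (2 * card D) = 2 * real (2*q-1) * real (pn n) * real (M3 q n + 1)"
      unfolding cD by (simp only: of_nat_mult of_nat_numeral mult.assoc)
    hence e: "real (2 * card D) = 2 * ((2 * rq - 1) * (real (pn n) * real (M3 q n + 1)))"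
      unfolding r21 by (simp only: mult.assoc)
    have p1: "2 * rq - 1 > 0" using rq1 by simp
    have p2: "real (pn n) > 0" using pn0 by simp
    have p3: "real (M3 q n + 1) > 0" by simp
    have "log q (real (2 * card D)) = log q 2 + log q ((2 * rq - 1) * (real (pn n) * real (M3 q n + 1)))"
      unfolding e by (rule log_mult_pos) (use p1 p2 p3 in auto)
    also have "log q ((2 * rq - 1) * (real (pn n) * real (M3 q n + 1))) = log q (2 * rq - 1) + log q (real (pn n) * real (M3 q n + 1))"
      by (rule log_mult_pos) (use p1 p2 p3 in auto)
    also have "log q (real (pn n) * real (M3 q n + 1)) = log q (real (pn n)) + log q (real (M3 q n + 1))"
      by (rule log_mult_pos) (use p1 p2 p3 in auto)
    finally show ?thesis by simp
  qed
  have lp: "log q (real (pn n)) \<le> log q 16 + lq"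
  proof -
    have "log q (real (pn n)) \<le> log q (16 * real n)"
      using pnb pn0 rn q2 by (subst log_le_cancel_iff) auto
    also have "\<dots> = log q 16 + lq" unfolding lq_def using rn by (simp add: log_mult)
    finally show ?thesis .
  qed
  have lm: "log q (real (M3 q n + 1)) \<le> log q (3 * rq) + log q lq"
  proof -
    have "real (M3 q n + 1) \<le> rq * real L"
    proof -
      obtain q' where q': "q = Suc q'" using q0 by (cases q) auto
      have "M3 q n + 1 \<le> q * L" using M3e L1 q' by simp
      hence "real (M3 q n + 1) \<le> real (q * L)" by (simp only: of_nat_le_iff)
      thus ?thesis unfolding rq_def by simp
    qed
    also have "\<dots> \<le> rq * (3 * lq)" using rL Lc_le llq lq1 rq1 by (intro mult_left_mono) auto
    finally have le: "real (M3 q n + 1) \<le> 3 * rq * lq" by simp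
    have "log q (real (M3 q n + 1)) \<le> log q (3 * rq * lq)"
      using le q2 lq1 rq1 by (subst log_le_cancel_iff) auto
    also have "\<dots> = log q (3 * rq) + log q lq" using rq1 lq1 by (simp add: log_mult)
    finally show ?thesis .
  qed
  have "redundancy q n ?C \<le> lq + log q lq + Kc q"
    using red logD lp lm unfolding Kc_def rq_def by linarith
  moreover have "a \<le> 2*q-2" "b \<le> pn n - 1" "c \<le> M3 q n" using dD abc unfolding D_def by auto
  ultimately show ?thesis unfolding lq_def by blast
qed




theorem theorem13:
  fixes q :: nat
  assumes "q \<ge> 2"
  shows "(\<forall>n d1 d2 d3 x y. n \<ge> 1 \<longrightarrow> d1 \<le> 2 * q - 2 \<longrightarrow> d2 \<le> pn n - 1 \<longrightarrow> d3 \<le> M3 q n \<longrightarrow>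
            x \<in> CAux q n d1 d2 d3 \<longrightarrow> y \<in> CAux q n d1 d2 d3 \<longrightarrow> x \<noteq> y \<longrightarrow>
            hamming (Rvec x) (Rvec y) = 4 \<longrightarrow>
            \<not> (\<exists>u v w t1 t2 a1 b1 a2 b2.
                  u \<in> seqs q \<and> v \<in> seqs q \<and> w \<in> seqs q \<and> v \<noteq> [] \<and>
                  t1 \<ge> 1 \<and> t2 \<ge> 1 \<and> a1 < q \<and> b1 < q \<and> a2 < q \<and> b2 < q \<and>
                  a1 \<noteq> b1 \<and> a2 \<noteq> b2 \<and>
                  x = u @ alt t1 a1 b1 @ v @ alt t2 a2 b2 @ w \<and>
                  y = u @ alt t1 b1 a1 @ v @ alt t2 b2 a2 @ w))
         \<and> (\<exists>K::real. \<exists>N. \<forall>n\<ge>N. \<exists>d1 d2 d3. d1 \<le> 2 * q - 2 \<and> d2 \<le> pn n - 1 \<and> d3 \<le> M3 q n \<and>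
               redundancy q n (CAux q n d1 d2 d3)
                 \<le> log q (real n) + log q (log q (real n)) + K)"
proof (intro conjI allI impI notI)
  fix n d1 d2 d3 x y
  assume n1: "n \<ge> 1" and xC: "x \<in> CAux q n d1 d2 d3" and yC: "y \<in> CAux q n d1 d2 d3"
    and ex: "\<exists>u v w t1 t2 a1 b1 a2 b2.
                  u \<in> seqs q \<and> v \<in> seqs q \<and> w \<in> seqs q \<and> v \<noteq> [] \<and>
                  t1 \<ge> 1 \<and> t2 \<ge> 1 \<and> a1 < q \<and> b1 < q \<and> a2 < q \<and> b2 < q \<and>
                  a1 \<noteq> b1 \<and> a2 \<noteq> b2 \<and>
                  x = u @ alt t1 a1 b1 @ v @ alt t2 a2 b2 @ w \<and>
                  y = u @ alt t1 b1 a1 @ v @ alt t2 b2 a2 @ w"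
  then obtain u v w t1 t2 a1 b1 a2 b2 where
    h: "v \<noteq> []" "t1 \<ge> 1" "t2 \<ge> 1" "a1 < q" "b1 < q" "a2 < q" "b2 < q" "a1 \<noteq> b1" "a2 \<noteq> b2"
       "x = u @ alt t1 a1 b1 @ v @ alt t2 a2 b2 @ w"
       "y = u @ alt t1 b1 a1 @ v @ alt t2 b2 a2 @ w"
    by blast
  show False by (rule part1[OF assms n1 xC yC h])
next
  obtain N0 where N0: "\<And>n. n \<ge> N0 \<Longrightarrow> pn n \<le> 16 * n"
    using pn_le unfolding eventually_sequentially by blast
  show "\<exists>K::real. \<exists>N. \<forall>n\<ge>N. \<exists>d1 d2 d3. d1 \<le> 2 * q - 2 \<and> d2 \<le> pn n - 1 \<and> d3 \<le> M3 q n \<and>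
               redundancy q n (CAux q n d1 d2 d3)
                 \<le> log q (real n) + log q (log q (real n)) + K"
  proof (rule exI[of _ "Kc q"], rule exI[of _ "max N0 (q ^ (2*q))"], intro allI impI)
    fix n assume "max N0 (q ^ (2*q)) \<le> n"
    hence "N0 \<le> n" "q ^ (2*q) \<le> n" by auto
    thus "\<exists>d1 d2 d3. d1 \<le> 2 * q - 2 \<and> d2 \<le> pn n - 1 \<and> d3 \<le> M3 q n \<and>
               redundancy q n (CAux q n d1 d2 d3)
                 \<le> log q (real n) + log q (log q (real n)) + Kc q"
      using part2_n[OF assms] N0 by blast
  qed
qed


end
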